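(* Let $N\in\mathbb{N}$, $\gamma_1,\dots,\gamma_N\ge 0$, and let $\Phi_1,\dots,\Phi_N$ be independent random variables where $\Phi_i$ has the law of $Y_i\bmod 2\pi$ with $Y_i\sim\mathcal{N}(0,\gamma_i)$. For $\mathcal{S}\subseteq[N]:=\{1,\dots,N\}$ let $\overline{G}(\mathcal{S}):=\sum_{i\in\mathcal{S}}\sum_{j\in\mathcal{S}}\cos(\Phi_i-\Phi_j)$. Then both set functions $\mathcal{S}\mapsto\mathbb{E}[\overline{G}(\mathcal{S})]$ and $\mathcal{S}\mapsto\mathrm{Var}(\overline{G}(\mathcal{S}))$ on $2^{[N]}$ are supermodular.
   Context: A set function $f:2^{\Omega}\to\mathbb{R}$ is submodular if for all $X\subseteq Y\subseteq\Omega$ and every $e\in\Omega\setminus Y$, $f(X\cup\{e\})-f(X)\ge f(Y\cup\{e\})-f(Y)$; $f$ is supermodular if $-f$ is submodular. $\overline{G}(\mathcal{S})$ is the beamforming gain of the subset $\mathcal{S}$ of agents, $\gamma_i$ the effective localization error and $\Phi_i$ the wrapped normal total phase of agent $i$. *)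

theory Defs
  imports "HOL-Probability.Probability"
begin

definition gaussian_law :: "real \<Rightarrow> real measure" where
  "gaussian_law gam =
     (if gam = 0 then return borel 0
      else density lborel (\<lambda>x. ennreal (normal_density 0 (sqrt gam) x)))"

definition mod_2pi :: "real \<Rightarrow> real" where
  "mod_2pi y = y - 2 * pi * real_of_int \<lfloor>y / (2 * pi)\<rfloor>"

definition wrapped_normal :: "real \<Rightarrow> real measure" where
  "wrapped_normal gam = distr (gaussian_law gam) borel mod_2pi"

definition beam_gain :: "(nat \<Rightarrow> 'a \<Rightarrow> real) \<Rightarrow> nat set \<Rightarrow> 'a \<Rightarrow> real" where
  "beam_gain \<Phi> S \<omega> = (\<Sum>i\<in>S. \<Sum>j\<in>S. cos (\<Phi> i \<omega> - \<Phi> j \<omega>))"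

definition submodular_on :: "'b set \<Rightarrow> ('b set \<Rightarrow> real) \<Rightarrow> bool" where
  "submodular_on \<Omega> f \<longleftrightarrow>
     (\<forall>X Y e. X \<subseteq> Y \<and> Y \<subseteq> \<Omega> \<and> e \<in> \<Omega> - Y \<longrightarrow>
        f (X \<union> {e}) - f X \<ge> f (Y \<union> {e}) - f Y)"

definition supermodular_on :: "'b set \<Rightarrow> ('b set \<Rightarrow> real) \<Rightarrow> bool" where
  "supermodular_on \<Omega> f \<longleftrightarrow> submodular_on \<Omega> (\<lambda>S. - f S)"

end

theory Submission
  imports Defs
begin


lemma mod_2pi_meas[measurable]: "mod_2pi \<in> borel_measurable borel"
  unfolding mod_2pi_def by measurable

lemma cos_mod_2pi: "cos (mod_2pi y) = cos y" and sin_mod_2pi: "sin (mod_2pi y) = sin y"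
  unfolding mod_2pi_def by (simp_all add: cos_diff sin_diff)

lemma sets_gaussian: "sets (gaussian_law g) = sets borel"
  unfolding gaussian_law_def by auto

lemma gauss_char:
  assumes "g > 0"
  shows "integral\<^sup>L (gaussian_law g) cos = exp (- g / 2)"
    and "integral\<^sup>L (gaussian_law g) sin = 0"
proof -
  define s where "s = sqrt g"
  have s: "s > 0" using assms by (simp add: s_def)
  interpret P: real_distribution std_normal_distribution by (rule real_dist_normal_dist)
  have d0: "distributed std_normal_distribution lborel (\<lambda>x. x) std_normal_density"
    unfolding distributed_def by (auto simp: distr_id2)
  have d: "distributed std_normal_distribution lborel (\<lambda>x. 0 + s * x) (normal_density (0 + s * 0) (\<bar>s\<bar> * 1))"
    using P.normal_density_affine[OF d0, of s 0] s by simp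
  have eq: "gaussian_law g = distr std_normal_distribution lborel (\<lambda>x. s * x)"
    using d assms s unfolding distributed_def gaussian_law_def s_def by auto
  have ch: "char std_normal_distribution s = complex_of_real (exp (- (s^2)/2))"
    by (simp add: char_std_normal_distribution)
  have int: "integrable std_normal_distribution (\<lambda>x. iexp (s * x))"
    by (rule P.integrable_iexp) auto
  have "integral\<^sup>L (gaussian_law g) cos = (LINT x|std_normal_distribution. cos (s * x))"
    unfolding eq by (subst integral_distr) auto
  also have "\<dots> = (LINT x|std_normal_distribution. Re (iexp (s * x)))"
    by (simp add: Re_exp)
  also have "\<dots> = Re (char std_normal_distribution s)"
    unfolding char_def using int by simp
  also have "\<dots> = exp (- g / 2)" using ch s assms by (simp add: s_def)
  finally show "integral\<^sup>L (gaussian_law g) cos = exp (- g / 2)" .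
  have "integral\<^sup>L (gaussian_law g) sin = (LINT x|std_normal_distribution. sin (s * x))"
    unfolding eq by (subst integral_distr) auto
  also have "\<dots> = (LINT x|std_normal_distribution. Im (iexp (s * x)))"
    by (simp add: Im_exp)
  also have "\<dots> = Im (char std_normal_distribution s)"
    unfolding char_def using int by simp
  also have "\<dots> = 0" using ch by simp
  finally show "integral\<^sup>L (gaussian_law g) sin = 0" .
qed

lemma wrapped_moments:
  assumes "g \<ge> 0"
  shows "integral\<^sup>L (wrapped_normal g) cos \<ge> 0" and "integral\<^sup>L (wrapped_normal g) sin = 0"
proof -
  have m: "mod_2pi \<in> measurable (gaussian_law g) borel"
  proof -
    have "measurable (gaussian_law g) borel = measurable borel borel"
      by (rule measurable_cong_sets) (simp_all add: sets_gaussian)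
    then show ?thesis using mod_2pi_meas by metis
  qed
  have c: "integral\<^sup>L (wrapped_normal g) cos = integral\<^sup>L (gaussian_law g) cos"
    unfolding wrapped_normal_def by (subst integral_distr[OF m]) (auto simp: cos_mod_2pi)
  have s: "integral\<^sup>L (wrapped_normal g) sin = integral\<^sup>L (gaussian_law g) sin"
    unfolding wrapped_normal_def by (subst integral_distr[OF m]) (auto simp: sin_mod_2pi)
  show "integral\<^sup>L (wrapped_normal g) cos \<ge> 0"
  proof (cases "g = 0")
    case True then show ?thesis unfolding c by (simp add: gaussian_law_def integral_return)
  next
    case False then show ?thesis unfolding c using assms gauss_char(1)[of g] by simp
  qed
  show "integral\<^sup>L (wrapped_normal g) sin = 0"
  proof (cases "g = 0")
    case True then show ?thesis unfolding s by (simp add: gaussian_law_def integral_return)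
  next
    case False then show ?thesis unfolding s using assms gauss_char(2)[of g] by simp
  qed
qed



lemma local_super:
  fixes F :: "'b set \<Rightarrow> real"
  assumes fin: "finite \<Omega>"
    and loc: "\<And>S e f. S \<subseteq> \<Omega> \<Longrightarrow> e \<in> \<Omega> \<Longrightarrow> f \<in> \<Omega> \<Longrightarrow> e \<notin> S \<Longrightarrow> f \<notin> S \<Longrightarrow> e \<noteq> f \<Longrightarrow>
       F (insert f (insert e S)) - F (insert e S) - F (insert f S) + F S \<ge> 0"
  shows "supermodular_on \<Omega> F"
proof -
  have key: "F (insert e (X \<union> D)) - F (X \<union> D) \<ge> F (insert e X) - F X"
    if "finite D" "X \<subseteq> \<Omega>" "D \<subseteq> \<Omega>" "e \<in> \<Omega>" "e \<notin> X" "e \<notin> D" for D X e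
    using that
  proof (induction D rule: finite_induct)
    case empty then show ?case by simp
  next
    case (insert d D)
    show ?case
    proof (cases "d \<in> X")
      case True
      then have "X \<union> insert d D = X \<union> D" by auto
      then show ?thesis using insert by simp
    next
      case False
      have l: "F (insert d (insert e (X \<union> D))) - F (insert e (X \<union> D)) - F (insert d (X \<union> D)) + F (X \<union> D) \<ge> 0"
        using loc[of "X \<union> D" e d] insert False by auto
      have "insert e (X \<union> insert d D) = insert d (insert e (X \<union> D))" "X \<union> insert d D = insert d (X \<union> D)"
        by auto
      then show ?thesis using l insert by simp
    qed
  qed
  show ?thesis
    unfolding supermodular_on_def submodular_on_def
  proof (intro allI impI, elim conjE)
    fix X Y e assume XY: "X \<subseteq> Y" "Y \<subseteq> \<Omega>" "e \<in> \<Omega> - Y"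
    have fD: "finite (Y - X)" using fin XY finite_subset by blast
    have "Y = X \<union> (Y - X)" using XY by auto
    then have "F (insert e Y) - F Y \<ge> F (insert e X) - F X"
      using key[OF fD, of X e] XY by auto
    then show "- F (X \<union> {e}) - - F X \<ge> - F (Y \<union> {e}) - - F Y" by simp
  qed
qed

locale beam = prob_space M for M :: "'a measure" +
  fixes \<Phi> :: "nat \<Rightarrow> 'a \<Rightarrow> real" and \<gamma> :: "nat \<Rightarrow> real" and N :: nat
  assumes gpos: "\<forall>i\<in>{1..N}. \<gamma> i \<ge> 0"
    and ind: "indep_vars (\<lambda>_. borel) \<Phi> {1..N}"
    and dis: "\<forall>i\<in>{1..N}. distr M borel (\<Phi> i) = wrapped_normal (\<gamma> i)"
begin

definition bnd :: "('a \<Rightarrow> real) \<Rightarrow> bool" where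
  "bnd X \<longleftrightarrow> X \<in> borel_measurable M \<and> (\<exists>B. \<forall>\<omega>\<in>space M. \<bar>X \<omega>\<bar> \<le> B)"

definition cov :: "('a \<Rightarrow> real) \<Rightarrow> ('a \<Rightarrow> real) \<Rightarrow> real" where
  "cov X Y = expectation (\<lambda>\<omega>. X \<omega> * Y \<omega>) - expectation X * expectation Y"

definition cs :: "nat set \<Rightarrow> 'a \<Rightarrow> real" where
  "cs S \<omega> = (\<Sum>k\<in>S. cos (\<Phi> k \<omega>))"
definition sn :: "nat set \<Rightarrow> 'a \<Rightarrow> real" where
  "sn S \<omega> = (\<Sum>k\<in>S. sin (\<Phi> k \<omega>))"

lemma Phi_meas: "k \<in> {1..N} \<Longrightarrow> \<Phi> k \<in> borel_measurable M"
  using ind unfolding indep_vars_def by auto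

lemma bnd_integrable: "bnd X \<Longrightarrow> integrable M X"
  unfolding bnd_def by (auto intro!: integrable_const_bound AE_I2)

lemma bnd_const[simp]: "bnd (\<lambda>\<omega>. c)"
  unfolding bnd_def by auto

lemma bnd_add[simp]: "bnd X \<Longrightarrow> bnd Y \<Longrightarrow> bnd (\<lambda>\<omega>. X \<omega> + Y \<omega>)"
  unfolding bnd_def
proof (elim conjE exE, intro conjI)
  fix B1 B2 assume "\<forall>\<omega>\<in>space M. \<bar>X \<omega>\<bar> \<le> B1" "\<forall>\<omega>\<in>space M. \<bar>Y \<omega>\<bar> \<le> B2"
  then show "\<exists>B. \<forall>\<omega>\<in>space M. \<bar>X \<omega> + Y \<omega>\<bar> \<le> B"
    by (intro exI[of _ "B1 + B2"]) (auto intro: abs_triangle_ineq[THEN order_trans] add_mono)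
qed auto

lemma bnd_mult[simp]: "bnd X \<Longrightarrow> bnd Y \<Longrightarrow> bnd (\<lambda>\<omega>. X \<omega> * Y \<omega>)"
  unfolding bnd_def
proof (elim conjE exE, intro conjI)
  fix B1 B2 assume a: "\<forall>\<omega>\<in>space M. \<bar>X \<omega>\<bar> \<le> B1" "\<forall>\<omega>\<in>space M. \<bar>Y \<omega>\<bar> \<le> B2"
  show "\<exists>B. \<forall>\<omega>\<in>space M. \<bar>X \<omega> * Y \<omega>\<bar> \<le> B"
  proof (intro exI[of _ "B1 * B2"] ballI)
    fix \<omega> assume "\<omega> \<in> space M"
    then have "\<bar>X \<omega>\<bar> \<le> B1" "\<bar>Y \<omega>\<bar> \<le> B2" using a by auto
    then show "\<bar>X \<omega> * Y \<omega>\<bar> \<le> B1 * B2"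
      unfolding abs_mult by (intro mult_mono) auto
  qed
qed auto

lemma bnd_minus[simp]: "bnd X \<Longrightarrow> bnd (\<lambda>\<omega>. - X \<omega>)"
  unfolding bnd_def by auto

lemma bnd_diff[simp]: "bnd X \<Longrightarrow> bnd Y \<Longrightarrow> bnd (\<lambda>\<omega>. X \<omega> - Y \<omega>)"
  using bnd_add[of X "\<lambda>\<omega>. - Y \<omega>"] by simp

lemma bnd_cos[simp]: "k \<in> {1..N} \<Longrightarrow> bnd (\<lambda>\<omega>. cos (\<Phi> k \<omega>))"
  unfolding bnd_def using Phi_meas[of k] by (auto intro!: exI[of _ 1])

lemma bnd_sin[simp]: "k \<in> {1..N} \<Longrightarrow> bnd (\<lambda>\<omega>. sin (\<Phi> k \<omega>))"
  unfolding bnd_def using Phi_meas[of k] by (auto intro!: exI[of _ 1])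

lemma bnd_sum: "finite S \<Longrightarrow> (\<And>k. k \<in> S \<Longrightarrow> bnd (X k)) \<Longrightarrow> bnd (\<lambda>\<omega>. \<Sum>k\<in>S. X k \<omega>)"
  by (induction S rule: finite_induct) auto

lemma bnd_cs[simp]: "S \<subseteq> {1..N} \<Longrightarrow> bnd (cs S)"
  unfolding cs_def by (rule bnd_sum) (auto intro: finite_subset)
lemma bnd_sn[simp]: "S \<subseteq> {1..N} \<Longrightarrow> bnd (sn S)"
  unfolding sn_def by (rule bnd_sum) (auto intro: finite_subset)

lemma E_add[simp]: "bnd X \<Longrightarrow> bnd Y \<Longrightarrow> expectation (\<lambda>\<omega>. X \<omega> + Y \<omega>) = expectation X + expectation Y"
  by (simp add: bnd_integrable)
lemma E_diff[simp]: "bnd X \<Longrightarrow> bnd Y \<Longrightarrow> expectation (\<lambda>\<omega>. X \<omega> - Y \<omega>) = expectation X - expectation Y"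
  by (simp add: bnd_integrable)

lemma cov_comm: "cov X Y = cov Y X"
  unfolding cov_def by (simp add: mult.commute)

lemma cov_add_left: "bnd X \<Longrightarrow> bnd Y \<Longrightarrow> bnd Z \<Longrightarrow> cov (\<lambda>\<omega>. X \<omega> + Y \<omega>) Z = cov X Z + cov Y Z"
  unfolding cov_def by (simp add: distrib_right algebra_simps)

lemma cov_add_right: "bnd X \<Longrightarrow> bnd Y \<Longrightarrow> bnd Z \<Longrightarrow> cov Z (\<lambda>\<omega>. X \<omega> + Y \<omega>) = cov Z X + cov Z Y"
  using cov_add_left[of X Y Z] by (simp add: cov_comm)

lemma cov_affine_left: "bnd X \<Longrightarrow> bnd Y \<Longrightarrow> cov (\<lambda>\<omega>. c * X \<omega> + d) Y = c * cov X Y"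
proof -
  assume b: "bnd X" "bnd Y"
  have "cov (\<lambda>\<omega>. c * X \<omega> + d) Y = cov (\<lambda>\<omega>. c * X \<omega>) Y + cov (\<lambda>\<omega>. d) Y"
    using b by (intro cov_add_left) auto
  also have "cov (\<lambda>\<omega>. d) Y = 0" unfolding cov_def by (simp add: prob_space)
  also have "cov (\<lambda>\<omega>. c * X \<omega>) Y = c * cov X Y" unfolding cov_def
    by (simp add: mult.assoc algebra_simps)
  finally show ?thesis by simp
qed

lemma cov_affine_right: "bnd X \<Longrightarrow> bnd Y \<Longrightarrow> cov Y (\<lambda>\<omega>. c * X \<omega> + d) = c * cov Y X"
  using cov_affine_left[of X Y c d] by (simp add: cov_comm)

lemma cov_self_nonneg: assumes "bnd X" shows "cov X X \<ge> 0"
proof -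
  let ?m = "expectation X"
  have "0 \<le> expectation (\<lambda>\<omega>. (X \<omega> - ?m)\<^sup>2)" by simp
  also have "(\<lambda>\<omega>. (X \<omega> - ?m)\<^sup>2) = (\<lambda>\<omega>. X \<omega> * X \<omega> + ((-2 * ?m) * X \<omega> + ?m\<^sup>2))"
    by (auto simp: power2_eq_square algebra_simps)
  also have "expectation \<dots> = cov X X" using assms unfolding cov_def
    by (simp add: prob_space power2_eq_square)
  finally show ?thesis .
qed

lemma var_eq: assumes "bnd X" shows "expectation (\<lambda>\<omega>. (X \<omega> - expectation X)\<^sup>2) = cov X X"
proof -
  let ?m = "expectation X"
  have e: "(\<lambda>\<omega>. (X \<omega> - ?m)\<^sup>2) = (\<lambda>\<omega>. X \<omega> * X \<omega> + ((-2 * ?m) * X \<omega> + ?m\<^sup>2))"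
    by (auto simp: power2_eq_square algebra_simps)
  have "expectation (\<lambda>\<omega>. X \<omega> * X \<omega> + ((-2 * ?m) * X \<omega> + ?m\<^sup>2)) = cov X X" using assms unfolding cov_def
    by (simp add: prob_space power2_eq_square)
  then show ?thesis by (simp only: e)
qed

end


context beam begin

lemma fact3:
  fixes p :: "real \<Rightarrow> real \<Rightarrow> real" and g h :: "real \<Rightarrow> real"
  assumes S: "S \<subseteq> {1..N}" and e: "e \<in> {1..N}" "e \<notin> S" and f: "f \<in> {1..N}" "f \<notin> S" and ef: "e \<noteq> f"
    and pm: "(\<lambda>z. p (fst z) (snd z)) \<in> borel_measurable (borel \<Otimes>\<^sub>M borel)"
    and gm: "g \<in> borel_measurable borel" and hm: "h \<in> borel_measurable borel"
    and bp: "bnd (\<lambda>\<omega>. p (cs S \<omega>) (sn S \<omega>))" and bg: "bnd (\<lambda>\<omega>. g (\<Phi> e \<omega>))" and bh: "bnd (\<lambda>\<omega>. h (\<Phi> f \<omega>))"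
    and Z: "\<And>\<omega>. Z \<omega> = p (cs S \<omega>) (sn S \<omega>) * g (\<Phi> e \<omega>) * h (\<Phi> f \<omega>)"
  shows "expectation Z = expectation (\<lambda>\<omega>. p (cs S \<omega>) (sn S \<omega>)) * expectation (\<lambda>\<omega>. g (\<Phi> e \<omega>)) * expectation (\<lambda>\<omega>. h (\<Phi> f \<omega>))"
proof -
  define K where "K j = (if j = (0::nat) then S else if j = 1 then {e} else {f})" for j
  have ind': "indep_vars (\<lambda>j. PiM (K j) (\<lambda>_. borel)) (\<lambda>j \<omega>. restrict (\<lambda>i. \<Phi> i \<omega>) (K j)) {0,1,2}"
    by (rule indep_vars_restrict[OF ind]) (use S e f ef in \<open>auto simp: K_def disjoint_family_on_def\<close>)
  define Y where "Y = (\<lambda>j (w :: nat \<Rightarrow> real). (if j = (0::nat) then p (\<Sum>k\<in>S. cos (w k)) (\<Sum>k\<in>S. sin (w k)) else if j = 1 then g (w e) else h (w f)))"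
  have Ym: "Y j \<in> borel_measurable (PiM (K j) (\<lambda>_. borel))" if jj: "j \<in> {0,1,2}" for j
  proof -
    consider "j = 0" | "j = 1" | "j = 2" using jj by auto
    then show ?thesis
    proof cases
      case 1
      have m1: "(\<lambda>w::nat\<Rightarrow>real. (\<Sum>k\<in>S. cos (w k))) \<in> borel_measurable (PiM S (\<lambda>_. borel))"
      proof (rule borel_measurable_sum)
        fix k assume kS: "k \<in> S"
        show "(\<lambda>w::nat\<Rightarrow>real. cos (w k)) \<in> borel_measurable (PiM S (\<lambda>_. borel))"
          by (rule measurable_compose[OF measurable_component_singleton[OF kS] borel_measurable_cos])
      qed
      have m2: "(\<lambda>w::nat\<Rightarrow>real. (\<Sum>k\<in>S. sin (w k))) \<in> borel_measurable (PiM S (\<lambda>_. borel))"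
      proof (rule borel_measurable_sum)
        fix k assume kS: "k \<in> S"
        show "(\<lambda>w::nat\<Rightarrow>real. sin (w k)) \<in> borel_measurable (PiM S (\<lambda>_. borel))"
          by (rule measurable_compose[OF measurable_component_singleton[OF kS] borel_measurable_sin])
      qed
      have "(\<lambda>w. (\<lambda>z. p (fst z) (snd z)) ((\<Sum>k\<in>S. cos (w k)), (\<Sum>k\<in>S. sin (w k)))) \<in> borel_measurable (PiM S (\<lambda>_. borel))"
        by (rule measurable_compose[OF _ pm]) (use m1 m2 in measurable)
      then show ?thesis using 1 by (simp add: Y_def K_def)
    next
      case 2
      then show ?thesis using gm by (simp add: Y_def K_def measurable_compose[OF measurable_component_singleton])
    next
      case 3
      then show ?thesis using hm by (simp add: Y_def K_def measurable_compose[OF measurable_component_singleton])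
    qed
  qed
  have ind2: "indep_vars (\<lambda>_. borel) (\<lambda>j \<omega>. Y j (restrict (\<lambda>i. \<Phi> i \<omega>) (K j))) {0,1,2}"
    by (rule indep_vars_compose2[OF ind' Ym])
  have Y0: "Y 0 (restrict (\<lambda>i. \<Phi> i \<omega>) (K 0)) = p (cs S \<omega>) (sn S \<omega>)" for \<omega>
    unfolding Y_def K_def cs_def sn_def by (simp cong: sum.cong)
  have Y1: "Y 1 (restrict (\<lambda>i. \<Phi> i \<omega>) (K 1)) = g (\<Phi> e \<omega>)" for \<omega>
    unfolding Y_def K_def by simp
  have Y2: "Y 2 (restrict (\<lambda>i. \<Phi> i \<omega>) (K 2)) = h (\<Phi> f \<omega>)" for \<omega>
    unfolding Y_def K_def by simp
  have int: "integrable M (\<lambda>\<omega>. Y j (restrict (\<lambda>i. \<Phi> i \<omega>) (K j)))" if "j \<in> {0,1,2}" for j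
    using that Y0 Y1 Y2 bp bg bh by (auto intro: bnd_integrable)
  have "expectation (\<lambda>\<omega>. \<Prod>j\<in>{0,1,2}. Y j (restrict (\<lambda>i. \<Phi> i \<omega>) (K j))) = (\<Prod>j\<in>{0,1,2}. expectation (\<lambda>\<omega>. Y j (restrict (\<lambda>i. \<Phi> i \<omega>) (K j))))"
    by (rule indep_vars_lebesgue_integral[OF _ ind2 int]) auto
  moreover have "Z = (\<lambda>\<omega>. p (cs S \<omega>) (sn S \<omega>) * (g (\<Phi> e \<omega>) * h (\<Phi> f \<omega>)))"
    using Z by (auto simp: mult.assoc)
  ultimately show ?thesis using Y0 Y1 Y2 by (simp add: mult.assoc)
qed

end


context beam begin

lemma E_cos_nonneg: "k \<in> {1..N} \<Longrightarrow> expectation (\<lambda>\<omega>. cos (\<Phi> k \<omega>)) \<ge> 0"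
  using integral_distr[OF Phi_meas[of k] borel_measurable_cos, symmetric] dis gpos wrapped_moments(1)[of "\<gamma> k"]
  by auto

lemma E_sin_zero: "k \<in> {1..N} \<Longrightarrow> expectation (\<lambda>\<omega>. sin (\<Phi> k \<omega>)) = 0"
  using integral_distr[OF Phi_meas[of k] borel_measurable_sin, symmetric] dis gpos wrapped_moments(2)[of "\<gamma> k"]
  by auto

lemma E_cs: assumes "S \<subseteq> {1..N}" shows "expectation (cs S) \<ge> 0"
proof -
  have "expectation (cs S) = (\<Sum>k\<in>S. expectation (\<lambda>\<omega>. cos (\<Phi> k \<omega>)))"
    unfolding cs_def by (rule Bochner_Integration.integral_sum) (use assms in \<open>auto intro!: bnd_integrable\<close>)
  also have "\<dots> \<ge> 0" using assms by (intro sum_nonneg E_cos_nonneg) auto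
  finally show ?thesis .
qed

lemma E_sn: assumes "S \<subseteq> {1..N}" shows "expectation (sn S) = 0"
proof -
  have "expectation (sn S) = (\<Sum>k\<in>S. expectation (\<lambda>\<omega>. sin (\<Phi> k \<omega>)))"
    unfolding sn_def by (rule Bochner_Integration.integral_sum) (use assms in \<open>auto intro!: bnd_integrable\<close>)
  also have "\<dots> = 0" using assms by (intro sum.neutral) (auto simp: E_sin_zero)
  finally show ?thesis .
qed

end


context beam begin

definition Aterm :: "nat \<Rightarrow> nat set \<Rightarrow> 'a \<Rightarrow> real" where
  "Aterm e S = (\<lambda>\<omega>. cs S \<omega> * cos (\<Phi> e \<omega>) + sn S \<omega> * sin (\<Phi> e \<omega>))"
definition Cterm :: "nat \<Rightarrow> nat \<Rightarrow> 'a \<Rightarrow> real" where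
  "Cterm e f = (\<lambda>\<omega>. cos (\<Phi> e \<omega>) * cos (\<Phi> f \<omega>) + sin (\<Phi> e \<omega>) * sin (\<Phi> f \<omega>))"
definition Pterm :: "nat set \<Rightarrow> 'a \<Rightarrow> real" where
  "Pterm S = (\<lambda>\<omega>. cs S \<omega> * cs S \<omega> + sn S \<omega> * sn S \<omega>)"

lemma Cterm_comm: "Cterm e f = Cterm f e"
  unfolding Cterm_def by (auto simp: mult.commute)

context
  fixes S e f
  assumes S: "S \<subseteq> {1..N}" and e: "e \<in> {1..N}" "e \<notin> S" and f: "f \<in> {1..N}" "f \<notin> S" and ef: "e \<noteq> f"
begin

lemmas F3 = fact3[OF S e f ef]

lemma ae: "expectation (\<lambda>\<omega>. cos (\<Phi> e \<omega>)) \<ge> 0" using E_cos_nonneg e by simp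
lemma af: "expectation (\<lambda>\<omega>. cos (\<Phi> f \<omega>)) \<ge> 0" using E_cos_nonneg f by simp
lemma se: "expectation (\<lambda>\<omega>. sin (\<Phi> e \<omega>)) = 0" using E_sin_zero e by simp
lemma sf: "expectation (\<lambda>\<omega>. sin (\<Phi> f \<omega>)) = 0" using E_sin_zero f by simp
lemma ex: "expectation (\<lambda>\<omega>. cs S \<omega>) \<ge> 0" using E_cs[OF S] by simp
lemma ey: "expectation (\<lambda>\<omega>. sn S \<omega>) = 0" using E_sn[OF S] by simp

lemma bX[simp]: "bnd (\<lambda>\<omega>. cs S \<omega>)" using bnd_cs[OF S] by simp
lemma bY[simp]: "bnd (\<lambda>\<omega>. sn S \<omega>)" using bnd_sn[OF S] by simp
lemma bCE[simp]: "bnd (\<lambda>\<omega>. cos (\<Phi> e \<omega>))" "bnd (\<lambda>\<omega>. sin (\<Phi> e \<omega>))" "bnd (\<lambda>\<omega>. cos (\<Phi> f \<omega>))" "bnd (\<lambda>\<omega>. sin (\<Phi> f \<omega>))"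
  using e f by auto


lemma E1: "expectation (\<lambda>\<omega>. 1::real) = 1" by (simp add: prob_space)

lemma covAB: "cov (Aterm e S) (Aterm f S) \<ge> 0"
proof -
  have c1: "cov (\<lambda>\<omega>. cs S \<omega> * cos (\<Phi> e \<omega>)) (\<lambda>\<omega>. cs S \<omega> * cos (\<Phi> f \<omega>)) = expectation (\<lambda>\<omega>. cos (\<Phi> e \<omega>)) * expectation (\<lambda>\<omega>. cos (\<Phi> f \<omega>)) * cov (\<lambda>\<omega>. cs S \<omega>) (\<lambda>\<omega>. cs S \<omega>)"
  proof -
    have a: "expectation (\<lambda>\<omega>. cs S \<omega> * cos (\<Phi> e \<omega>) * (cs S \<omega> * cos (\<Phi> f \<omega>))) = expectation (\<lambda>\<omega>. cs S \<omega> * cs S \<omega>) * expectation (\<lambda>\<omega>. cos (\<Phi> e \<omega>)) * expectation (\<lambda>\<omega>. cos (\<Phi> f \<omega>))"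
      by (rule F3[where p="\<lambda>u v. u * u" and g=cos and h=cos]; (measurable | auto simp: algebra_simps))
    have b: "expectation (\<lambda>\<omega>. cs S \<omega> * cos (\<Phi> e \<omega>)) = expectation (\<lambda>\<omega>. cs S \<omega>) * expectation (\<lambda>\<omega>. cos (\<Phi> e \<omega>)) * expectation (\<lambda>\<omega>. 1::real)"
      by (rule F3[where p="\<lambda>u v. u" and g=cos and h="\<lambda>_. 1"]; (measurable | auto simp: algebra_simps))
    have c: "expectation (\<lambda>\<omega>. cs S \<omega> * cos (\<Phi> f \<omega>)) = expectation (\<lambda>\<omega>. cs S \<omega>) * expectation (\<lambda>\<omega>. 1::real) * expectation (\<lambda>\<omega>. cos (\<Phi> f \<omega>))"
      by (rule F3[where p="\<lambda>u v. u" and g="\<lambda>_. 1" and h=cos]; (measurable | auto simp: algebra_simps))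
    show ?thesis unfolding cov_def a b c E1 by (simp add: algebra_simps)
  qed
  have c2: "cov (\<lambda>\<omega>. cs S \<omega> * cos (\<Phi> e \<omega>)) (\<lambda>\<omega>. sn S \<omega> * sin (\<Phi> f \<omega>)) = 0"
  proof -
    have a: "expectation (\<lambda>\<omega>. cs S \<omega> * cos (\<Phi> e \<omega>) * (sn S \<omega> * sin (\<Phi> f \<omega>))) = expectation (\<lambda>\<omega>. cs S \<omega> * sn S \<omega>) * expectation (\<lambda>\<omega>. cos (\<Phi> e \<omega>)) * expectation (\<lambda>\<omega>. sin (\<Phi> f \<omega>))"
      by (rule F3[where p="\<lambda>u v. u * v" and g=cos and h=sin]; (measurable | auto simp: algebra_simps))
    have c: "expectation (\<lambda>\<omega>. sn S \<omega> * sin (\<Phi> f \<omega>)) = expectation (\<lambda>\<omega>. sn S \<omega>) * expectation (\<lambda>\<omega>. 1::real) * expectation (\<lambda>\<omega>. sin (\<Phi> f \<omega>))"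
      by (rule F3[where p="\<lambda>u v. v" and g="\<lambda>_. 1" and h=sin]; (measurable | auto simp: algebra_simps))
    show ?thesis unfolding cov_def a c sf by simp
  qed
  have c3: "cov (\<lambda>\<omega>. sn S \<omega> * sin (\<Phi> e \<omega>)) (\<lambda>\<omega>. cs S \<omega> * cos (\<Phi> f \<omega>)) = 0"
  proof -
    have a: "expectation (\<lambda>\<omega>. sn S \<omega> * sin (\<Phi> e \<omega>) * (cs S \<omega> * cos (\<Phi> f \<omega>))) = expectation (\<lambda>\<omega>. cs S \<omega> * sn S \<omega>) * expectation (\<lambda>\<omega>. sin (\<Phi> e \<omega>)) * expectation (\<lambda>\<omega>. cos (\<Phi> f \<omega>))"
      by (rule F3[where p="\<lambda>u v. u * v" and g=sin and h=cos]; (measurable | auto simp: algebra_simps))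
    have c: "expectation (\<lambda>\<omega>. sn S \<omega> * sin (\<Phi> e \<omega>)) = expectation (\<lambda>\<omega>. sn S \<omega>) * expectation (\<lambda>\<omega>. sin (\<Phi> e \<omega>)) * expectation (\<lambda>\<omega>. 1::real)"
      by (rule F3[where p="\<lambda>u v. v" and g=sin and h="\<lambda>_. 1"]; (measurable | auto simp: algebra_simps))
    show ?thesis unfolding cov_def a c se by simp
  qed
  have c4: "cov (\<lambda>\<omega>. sn S \<omega> * sin (\<Phi> e \<omega>)) (\<lambda>\<omega>. sn S \<omega> * sin (\<Phi> f \<omega>)) = 0"
  proof -
    have a: "expectation (\<lambda>\<omega>. sn S \<omega> * sin (\<Phi> e \<omega>) * (sn S \<omega> * sin (\<Phi> f \<omega>))) = expectation (\<lambda>\<omega>. sn S \<omega> * sn S \<omega>) * expectation (\<lambda>\<omega>. sin (\<Phi> e \<omega>)) * expectation (\<lambda>\<omega>. sin (\<Phi> f \<omega>))"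
      by (rule F3[where p="\<lambda>u v. v * v" and g=sin and h=sin]; (measurable | auto simp: algebra_simps))
    have c: "expectation (\<lambda>\<omega>. sn S \<omega> * sin (\<Phi> e \<omega>)) = expectation (\<lambda>\<omega>. sn S \<omega>) * expectation (\<lambda>\<omega>. sin (\<Phi> e \<omega>)) * expectation (\<lambda>\<omega>. 1::real)"
      by (rule F3[where p="\<lambda>u v. v" and g=sin and h="\<lambda>_. 1"]; (measurable | auto simp: algebra_simps))
    show ?thesis unfolding cov_def a c se by simp
  qed
  have "cov (Aterm e S) (Aterm f S) = expectation (\<lambda>\<omega>. cos (\<Phi> e \<omega>)) * expectation (\<lambda>\<omega>. cos (\<Phi> f \<omega>)) * cov (\<lambda>\<omega>. cs S \<omega>) (\<lambda>\<omega>. cs S \<omega>)"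
    unfolding Aterm_def by (simp add: cov_add_left cov_add_right c1 c2 c3 c4)
  also have "\<dots> \<ge> 0" using ae af cov_self_nonneg[OF bX] by simp
  finally show ?thesis .
qed

lemma covAC: "cov (Aterm e S) (Cterm e f) \<ge> 0"
proof -
  have c1: "cov (\<lambda>\<omega>. cs S \<omega> * cos (\<Phi> e \<omega>)) (\<lambda>\<omega>. cos (\<Phi> e \<omega>) * cos (\<Phi> f \<omega>)) = expectation (\<lambda>\<omega>. cs S \<omega>) * expectation (\<lambda>\<omega>. cos (\<Phi> f \<omega>)) * cov (\<lambda>\<omega>. cos (\<Phi> e \<omega>)) (\<lambda>\<omega>. cos (\<Phi> e \<omega>))"
  proof -
    have a: "expectation (\<lambda>\<omega>. cs S \<omega> * cos (\<Phi> e \<omega>) * (cos (\<Phi> e \<omega>) * cos (\<Phi> f \<omega>))) = expectation (\<lambda>\<omega>. cs S \<omega>) * expectation (\<lambda>\<omega>. cos (\<Phi> e \<omega>) * cos (\<Phi> e \<omega>)) * expectation (\<lambda>\<omega>. cos (\<Phi> f \<omega>))"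
      by (rule F3[where p="\<lambda>u v. u" and g="\<lambda>t. cos t * cos t" and h=cos]; (measurable | auto simp: algebra_simps))
    have b: "expectation (\<lambda>\<omega>. cs S \<omega> * cos (\<Phi> e \<omega>)) = expectation (\<lambda>\<omega>. cs S \<omega>) * expectation (\<lambda>\<omega>. cos (\<Phi> e \<omega>)) * expectation (\<lambda>\<omega>. 1::real)"
      by (rule F3[where p="\<lambda>u v. u" and g=cos and h="\<lambda>_. 1"]; (measurable | auto simp: algebra_simps))
    have c: "expectation (\<lambda>\<omega>. cos (\<Phi> e \<omega>) * cos (\<Phi> f \<omega>)) = expectation (\<lambda>\<omega>. 1::real) * expectation (\<lambda>\<omega>. cos (\<Phi> e \<omega>)) * expectation (\<lambda>\<omega>. cos (\<Phi> f \<omega>))"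
      by (rule F3[where p="\<lambda>u v. 1" and g=cos and h=cos]; (measurable | auto simp: algebra_simps))
    show ?thesis unfolding cov_def a b c E1 by (simp add: algebra_simps)
  qed
  have c2: "cov (\<lambda>\<omega>. cs S \<omega> * cos (\<Phi> e \<omega>)) (\<lambda>\<omega>. sin (\<Phi> e \<omega>) * sin (\<Phi> f \<omega>)) = 0"
  proof -
    have a: "expectation (\<lambda>\<omega>. cs S \<omega> * cos (\<Phi> e \<omega>) * (sin (\<Phi> e \<omega>) * sin (\<Phi> f \<omega>))) = expectation (\<lambda>\<omega>. cs S \<omega>) * expectation (\<lambda>\<omega>. cos (\<Phi> e \<omega>) * sin (\<Phi> e \<omega>)) * expectation (\<lambda>\<omega>. sin (\<Phi> f \<omega>))"
      by (rule F3[where p="\<lambda>u v. u" and g="\<lambda>t. cos t * sin t" and h=sin]; (measurable | auto simp: algebra_simps))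
    have c: "expectation (\<lambda>\<omega>. sin (\<Phi> e \<omega>) * sin (\<Phi> f \<omega>)) = expectation (\<lambda>\<omega>. 1::real) * expectation (\<lambda>\<omega>. sin (\<Phi> e \<omega>)) * expectation (\<lambda>\<omega>. sin (\<Phi> f \<omega>))"
      by (rule F3[where p="\<lambda>u v. 1" and g=sin and h=sin]; (measurable | auto simp: algebra_simps))
    show ?thesis unfolding cov_def a c sf by simp
  qed
  have c3: "cov (\<lambda>\<omega>. sn S \<omega> * sin (\<Phi> e \<omega>)) (\<lambda>\<omega>. cos (\<Phi> e \<omega>) * cos (\<Phi> f \<omega>)) = 0"
  proof -
    have a: "expectation (\<lambda>\<omega>. sn S \<omega> * sin (\<Phi> e \<omega>) * (cos (\<Phi> e \<omega>) * cos (\<Phi> f \<omega>))) = expectation (\<lambda>\<omega>. sn S \<omega>) * expectation (\<lambda>\<omega>. sin (\<Phi> e \<omega>) * cos (\<Phi> e \<omega>)) * expectation (\<lambda>\<omega>. cos (\<Phi> f \<omega>))"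
      by (rule F3[where p="\<lambda>u v. v" and g="\<lambda>t. sin t * cos t" and h=cos]; (measurable | auto simp: algebra_simps))
    have c: "expectation (\<lambda>\<omega>. sn S \<omega> * sin (\<Phi> e \<omega>)) = expectation (\<lambda>\<omega>. sn S \<omega>) * expectation (\<lambda>\<omega>. sin (\<Phi> e \<omega>)) * expectation (\<lambda>\<omega>. 1::real)"
      by (rule F3[where p="\<lambda>u v. v" and g=sin and h="\<lambda>_. 1"]; (measurable | auto simp: algebra_simps))
    show ?thesis unfolding cov_def a c ey by simp
  qed
  have c4: "cov (\<lambda>\<omega>. sn S \<omega> * sin (\<Phi> e \<omega>)) (\<lambda>\<omega>. sin (\<Phi> e \<omega>) * sin (\<Phi> f \<omega>)) = 0"
  proof -
    have a: "expectation (\<lambda>\<omega>. sn S \<omega> * sin (\<Phi> e \<omega>) * (sin (\<Phi> e \<omega>) * sin (\<Phi> f \<omega>))) = expectation (\<lambda>\<omega>. sn S \<omega>) * expectation (\<lambda>\<omega>. sin (\<Phi> e \<omega>) * sin (\<Phi> e \<omega>)) * expectation (\<lambda>\<omega>. sin (\<Phi> f \<omega>))"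
      by (rule F3[where p="\<lambda>u v. v" and g="\<lambda>t. sin t * sin t" and h=sin]; (measurable | auto simp: algebra_simps))
    have c: "expectation (\<lambda>\<omega>. sn S \<omega> * sin (\<Phi> e \<omega>)) = expectation (\<lambda>\<omega>. sn S \<omega>) * expectation (\<lambda>\<omega>. sin (\<Phi> e \<omega>)) * expectation (\<lambda>\<omega>. 1::real)"
      by (rule F3[where p="\<lambda>u v. v" and g=sin and h="\<lambda>_. 1"]; (measurable | auto simp: algebra_simps))
    show ?thesis unfolding cov_def a c ey by simp
  qed
  have "cov (Aterm e S) (Cterm e f) = expectation (\<lambda>\<omega>. cs S \<omega>) * expectation (\<lambda>\<omega>. cos (\<Phi> f \<omega>)) * cov (\<lambda>\<omega>. cos (\<Phi> e \<omega>)) (\<lambda>\<omega>. cos (\<Phi> e \<omega>))"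
    unfolding Aterm_def Cterm_def by (simp add: cov_add_left cov_add_right c1 c2 c3 c4)
  also have "\<dots> \<ge> 0" using ex af cov_self_nonneg[OF bCE(1)] by simp
  finally show ?thesis .
qed

lemma covPC: "cov (Pterm S) (Cterm e f) = 0"
proof -
  have a: "expectation (\<lambda>\<omega>. (cs S \<omega> * cs S \<omega> + sn S \<omega> * sn S \<omega>) * (cos (\<Phi> e \<omega>) * cos (\<Phi> f \<omega>))) = expectation (\<lambda>\<omega>. cs S \<omega> * cs S \<omega> + sn S \<omega> * sn S \<omega>) * expectation (\<lambda>\<omega>. cos (\<Phi> e \<omega>)) * expectation (\<lambda>\<omega>. cos (\<Phi> f \<omega>))"
    by (rule F3[where p="\<lambda>u v. u * u + v * v" and g=cos and h=cos]; (measurable | auto simp: algebra_simps))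
  have b: "expectation (\<lambda>\<omega>. (cs S \<omega> * cs S \<omega> + sn S \<omega> * sn S \<omega>) * (sin (\<Phi> e \<omega>) * sin (\<Phi> f \<omega>))) = expectation (\<lambda>\<omega>. cs S \<omega> * cs S \<omega> + sn S \<omega> * sn S \<omega>) * expectation (\<lambda>\<omega>. sin (\<Phi> e \<omega>)) * expectation (\<lambda>\<omega>. sin (\<Phi> f \<omega>))"
    by (rule F3[where p="\<lambda>u v. u * u + v * v" and g=sin and h=sin]; (measurable | auto simp: algebra_simps))
  have c: "expectation (\<lambda>\<omega>. cos (\<Phi> e \<omega>) * cos (\<Phi> f \<omega>)) = expectation (\<lambda>\<omega>. 1::real) * expectation (\<lambda>\<omega>. cos (\<Phi> e \<omega>)) * expectation (\<lambda>\<omega>. cos (\<Phi> f \<omega>))"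
    by (rule F3[where p="\<lambda>u v. 1" and g=cos and h=cos]; (measurable | auto simp: algebra_simps))
  have d: "expectation (\<lambda>\<omega>. sin (\<Phi> e \<omega>) * sin (\<Phi> f \<omega>)) = expectation (\<lambda>\<omega>. 1::real) * expectation (\<lambda>\<omega>. sin (\<Phi> e \<omega>)) * expectation (\<lambda>\<omega>. sin (\<Phi> f \<omega>))"
    by (rule F3[where p="\<lambda>u v. 1" and g=sin and h=sin]; (measurable | auto simp: algebra_simps))
  have "cov (Pterm S) (Cterm e f) = cov (\<lambda>\<omega>. cs S \<omega> * cs S \<omega> + sn S \<omega> * sn S \<omega>) (\<lambda>\<omega>. cos (\<Phi> e \<omega>) * cos (\<Phi> f \<omega>)) + cov (\<lambda>\<omega>. cs S \<omega> * cs S \<omega> + sn S \<omega> * sn S \<omega>) (\<lambda>\<omega>. sin (\<Phi> e \<omega>) * sin (\<Phi> f \<omega>))"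
    unfolding Pterm_def Cterm_def by (rule cov_add_right) auto
  also have "\<dots> = 0" unfolding cov_def a b c d E1 by simp
  finally show ?thesis .
qed

lemma ECterm: "expectation (Cterm e f) \<ge> 0"
proof -
  have c: "expectation (\<lambda>\<omega>. cos (\<Phi> e \<omega>) * cos (\<Phi> f \<omega>)) = expectation (\<lambda>\<omega>. 1::real) * expectation (\<lambda>\<omega>. cos (\<Phi> e \<omega>)) * expectation (\<lambda>\<omega>. cos (\<Phi> f \<omega>))"
    by (rule F3[where p="\<lambda>u v. 1" and g=cos and h=cos]; (measurable | auto simp: algebra_simps))
  have d: "expectation (\<lambda>\<omega>. sin (\<Phi> e \<omega>) * sin (\<Phi> f \<omega>)) = expectation (\<lambda>\<omega>. 1::real) * expectation (\<lambda>\<omega>. sin (\<Phi> e \<omega>)) * expectation (\<lambda>\<omega>. sin (\<Phi> f \<omega>))"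
    by (rule F3[where p="\<lambda>u v. 1" and g=sin and h=sin]; (measurable | auto simp: algebra_simps))
  show ?thesis unfolding Cterm_def using c d ae af se sf by (simp add: E1)
qed

end
end


context beam begin

lemma bg_eq: "beam_gain \<Phi> S \<omega> = cs S \<omega> * cs S \<omega> + sn S \<omega> * sn S \<omega>"
proof -
  have "beam_gain \<Phi> S \<omega> = (\<Sum>i\<in>S. \<Sum>j\<in>S. cos (\<Phi> i \<omega>) * cos (\<Phi> j \<omega>) + sin (\<Phi> i \<omega>) * sin (\<Phi> j \<omega>))"
    unfolding beam_gain_def by (simp add: cos_diff)
  also have "\<dots> = (\<Sum>i\<in>S. \<Sum>j\<in>S. cos (\<Phi> i \<omega>) * cos (\<Phi> j \<omega>)) + (\<Sum>i\<in>S. \<Sum>j\<in>S. sin (\<Phi> i \<omega>) * sin (\<Phi> j \<omega>))"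
    by (simp add: sum.distrib)
  also have "\<dots> = cs S \<omega> * cs S \<omega> + sn S \<omega> * sn S \<omega>"
    unfolding cs_def sn_def by (simp add: sum_product)
  finally show ?thesis .
qed

lemma bnd_bg: "S \<subseteq> {1..N} \<Longrightarrow> bnd (beam_gain \<Phi> S)"
  using bnd_add[OF bnd_mult[OF bnd_cs bnd_cs] bnd_mult[OF bnd_sn bnd_sn], of S S S S]
  by (simp add: bg_eq[abs_def])

lemma cs_insert: "finite S \<Longrightarrow> e \<notin> S \<Longrightarrow> cs (insert e S) \<omega> = cos (\<Phi> e \<omega>) + cs S \<omega>"
  unfolding cs_def by simp
lemma sn_insert: "finite S \<Longrightarrow> e \<notin> S \<Longrightarrow> sn (insert e S) \<omega> = sin (\<Phi> e \<omega>) + sn S \<omega>"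
  unfolding sn_def by simp

lemma second_diff:
  assumes "bnd P" "bnd A" "bnd B" "bnd C"
  shows "cov (\<lambda>\<omega>. P \<omega> + A \<omega> + (B \<omega> + C \<omega>)) (\<lambda>\<omega>. P \<omega> + A \<omega> + (B \<omega> + C \<omega>))
       - cov (\<lambda>\<omega>. P \<omega> + A \<omega>) (\<lambda>\<omega>. P \<omega> + A \<omega>) - cov (\<lambda>\<omega>. P \<omega> + B \<omega>) (\<lambda>\<omega>. P \<omega> + B \<omega>) + cov P P
     = 2 * cov A B + cov C C + 2 * cov P C + 2 * cov A C + 2 * cov B C"
proof -
  have "cov B A = cov A B" "cov C P = cov P C" "cov C A = cov A C" "cov C B = cov B C"
    "cov A P = cov P A" "cov B P = cov P B"
    by (simp_all add: cov_comm)
  then show ?thesis using assms by (simp add: cov_add_left cov_add_right)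
qed

context
  fixes S e f
  assumes S: "S \<subseteq> {1..N}" and e: "e \<in> {1..N}" "e \<notin> S" and f: "f \<in> {1..N}" "f \<notin> S" and ef: "e \<noteq> f"
begin

lemma finS: "finite S" using S finite_subset by blast

lemma bP[simp]: "bnd (Pterm S)" unfolding Pterm_def using S by simp
lemma bA[simp]: "bnd (Aterm e S)" "bnd (Aterm f S)" unfolding Aterm_def using S e f by simp_all
lemma bC[simp]: "bnd (Cterm e f)" unfolding Cterm_def using e f by simp

lemma sq1: "cos (t::real) * cos t + sin t * sin t = 1"
proof -
  have "sin t ^ 2 + cos t ^ 2 = 1" by simp
  then show ?thesis by (simp add: power2_eq_square add.commute)
qed

lemma G0: "beam_gain \<Phi> S = Pterm S"
  by (simp add: fun_eq_iff bg_eq Pterm_def)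

lemma Ge: "beam_gain \<Phi> (insert e S) = (\<lambda>\<omega>. Pterm S \<omega> + (2 * Aterm e S \<omega> + 1))"
proof
  fix \<omega>
  have "beam_gain \<Phi> (insert e S) \<omega> - (Pterm S \<omega> + (2 * Aterm e S \<omega> + 1))
     = cos (\<Phi> e \<omega>) * cos (\<Phi> e \<omega>) + sin (\<Phi> e \<omega>) * sin (\<Phi> e \<omega>) - 1"
    unfolding bg_eq cs_insert[OF finS e(2)] sn_insert[OF finS e(2)] Pterm_def Aterm_def
    by (simp add: algebra_simps)
  then show "beam_gain \<Phi> (insert e S) \<omega> = Pterm S \<omega> + (2 * Aterm e S \<omega> + 1)" using sq1 by simp
qed

lemma Gf: "beam_gain \<Phi> (insert f S) = (\<lambda>\<omega>. Pterm S \<omega> + (2 * Aterm f S \<omega> + 1))"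
proof
  fix \<omega>
  have "beam_gain \<Phi> (insert f S) \<omega> - (Pterm S \<omega> + (2 * Aterm f S \<omega> + 1))
     = cos (\<Phi> f \<omega>) * cos (\<Phi> f \<omega>) + sin (\<Phi> f \<omega>) * sin (\<Phi> f \<omega>) - 1"
    unfolding bg_eq cs_insert[OF finS f(2)] sn_insert[OF finS f(2)] Pterm_def Aterm_def
    by (simp add: algebra_simps)
  then show "beam_gain \<Phi> (insert f S) \<omega> = Pterm S \<omega> + (2 * Aterm f S \<omega> + 1)" using sq1 by simp
qed

lemma Gef: "beam_gain \<Phi> (insert f (insert e S)) =
   (\<lambda>\<omega>. Pterm S \<omega> + (2 * Aterm e S \<omega> + 1) + ((2 * Aterm f S \<omega> + 1) + 2 * Cterm e f \<omega>))"
proof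
  fix \<omega>
  have fe: "f \<notin> insert e S" using f ef by auto
  have fin2: "finite (insert e S)" using finS by simp
  show "beam_gain \<Phi> (insert f (insert e S)) \<omega> = Pterm S \<omega> + (2 * Aterm e S \<omega> + 1) + ((2 * Aterm f S \<omega> + 1) + 2 * Cterm e f \<omega>)"
    unfolding bg_eq cs_insert[OF fin2 fe] sn_insert[OF fin2 fe] cs_insert[OF finS e(2)] sn_insert[OF finS e(2)]
      Pterm_def Aterm_def Cterm_def
    apply (simp add: algebra_simps)
    using sq1[of "\<Phi> e \<omega>"] sq1[of "\<Phi> f \<omega>"] by linarith
qed

lemma mean_loc:
  "expectation (beam_gain \<Phi> (insert f (insert e S))) - expectation (beam_gain \<Phi> (insert e S))
   - expectation (beam_gain \<Phi> (insert f S)) + expectation (beam_gain \<Phi> S) \<ge> 0"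
proof -
  have "expectation (beam_gain \<Phi> (insert f (insert e S))) - expectation (beam_gain \<Phi> (insert e S))
   - expectation (beam_gain \<Phi> (insert f S)) + expectation (beam_gain \<Phi> S) = 2 * expectation (Cterm e f)"
    unfolding Gef Ge Gf G0 by (simp add: prob_space)
  then show ?thesis using ECterm[OF S e f ef] by simp
qed

lemma var_loc:
  "cov (beam_gain \<Phi> (insert f (insert e S))) (beam_gain \<Phi> (insert f (insert e S)))
   - cov (beam_gain \<Phi> (insert e S)) (beam_gain \<Phi> (insert e S))
   - cov (beam_gain \<Phi> (insert f S)) (beam_gain \<Phi> (insert f S))
   + cov (beam_gain \<Phi> S) (beam_gain \<Phi> S) \<ge> 0"
proof -
  let ?A = "\<lambda>\<omega>. 2 * Aterm e S \<omega> + 1" and ?B = "\<lambda>\<omega>. 2 * Aterm f S \<omega> + 1" and ?C = "\<lambda>\<omega>. 2 * Cterm e f \<omega> + 0"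
  have bA': "bnd ?A" "bnd ?B" "bnd ?C" by simp_all
  have C0: "?C = (\<lambda>\<omega>. 2 * Cterm e f \<omega>)" by simp
  have sd: "cov (beam_gain \<Phi> (insert f (insert e S))) (beam_gain \<Phi> (insert f (insert e S)))
   - cov (beam_gain \<Phi> (insert e S)) (beam_gain \<Phi> (insert e S))
   - cov (beam_gain \<Phi> (insert f S)) (beam_gain \<Phi> (insert f S))
   + cov (beam_gain \<Phi> S) (beam_gain \<Phi> S)
   = 2 * cov ?A ?B + cov ?C ?C + 2 * cov (Pterm S) ?C + 2 * cov ?A ?C + 2 * cov ?B ?C"
    using second_diff[OF bP bA'] unfolding Gef Ge Gf G0 C0 by simp
  have 1: "cov ?A ?B = 2 * (2 * cov (Aterm e S) (Aterm f S))"
    by (simp add: cov_affine_left cov_affine_right del: add_0_right)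
  have 2: "cov ?C ?C \<ge> 0" by (rule cov_self_nonneg) simp
  have 3: "cov (Pterm S) ?C = 2 * cov (Pterm S) (Cterm e f)"
    by (rule cov_affine_right) simp_all
  have 4: "cov ?A ?C = 2 * (2 * cov (Aterm e S) (Cterm e f))"
    by (simp add: cov_affine_left cov_affine_right del: add_0_right)
  have 5: "cov ?B ?C = 2 * (2 * cov (Aterm f S) (Cterm e f))"
    by (simp add: cov_affine_left cov_affine_right del: add_0_right)
  have n1: "cov (Aterm e S) (Aterm f S) \<ge> 0" by (rule covAB[OF S e f ef])
  have n3: "cov (Pterm S) (Cterm e f) = 0" by (rule covPC[OF S e f ef])
  have n4: "cov (Aterm e S) (Cterm e f) \<ge> 0" by (rule covAC[OF S e f ef])
  have n5: "cov (Aterm f S) (Cterm e f) \<ge> 0" using covAC[OF S f e ef[symmetric]] Cterm_comm[of e f] by simp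
  show ?thesis unfolding sd 1 3 4 5 using 2 n1 n3 n4 n5 by simp
qed

end
end



theorem theorem2:
  fixes M :: "'a measure" and \<Phi> :: "nat \<Rightarrow> 'a \<Rightarrow> real"
    and \<gamma> :: "nat \<Rightarrow> real" and N :: nat
  assumes "prob_space M"
    and "\<forall>i\<in>{1..N}. \<gamma> i \<ge> 0"
    and "prob_space.indep_vars M (\<lambda>_. borel) \<Phi> {1..N}"
    and "\<forall>i\<in>{1..N}. distr M borel (\<Phi> i) = wrapped_normal (\<gamma> i)"
  shows "supermodular_on {1..N} (\<lambda>S. integral\<^sup>L M (beam_gain \<Phi> S))
         \<and> supermodular_on {1..N}
           (\<lambda>S. integral\<^sup>L M (\<lambda>\<omega>. (beam_gain \<Phi> S \<omega> - integral\<^sup>L M (beam_gain \<Phi> S))\<^sup>2))"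
proof -
  interpret beam M \<Phi> \<gamma> N
    using assms unfolding beam_def beam_axioms_def by auto
  show ?thesis
  proof
    show "supermodular_on {1..N} (\<lambda>S. integral\<^sup>L M (beam_gain \<Phi> S))"
      by (rule local_super) (auto intro!: mean_loc)
    show "supermodular_on {1..N}
           (\<lambda>S. integral\<^sup>L M (\<lambda>\<omega>. (beam_gain \<Phi> S \<omega> - integral\<^sup>L M (beam_gain \<Phi> S))\<^sup>2))"
    proof (rule local_super)
      fix S e f
      assume a: "S \<subseteq> {1..N}" "e \<in> {1..N}" "f \<in> {1..N}" "e \<notin> S" "f \<notin> S" "e \<noteq> f"
      have v: "integral\<^sup>L M (\<lambda>\<omega>. (beam_gain \<Phi> T \<omega> - integral\<^sup>L M (beam_gain \<Phi> T))\<^sup>2) = cov (beam_gain \<Phi> T) (beam_gain \<Phi> T)"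
        if "T \<subseteq> {1..N}" for T
        using var_eq[OF bnd_bg[OF that]] .
      have s: "insert f (insert e S) \<subseteq> {1..N}" "insert e S \<subseteq> {1..N}" "insert f S \<subseteq> {1..N}" using a by auto
      show "0 \<le> integral\<^sup>L M (\<lambda>\<omega>. (beam_gain \<Phi> (insert f (insert e S)) \<omega> - integral\<^sup>L M (beam_gain \<Phi> (insert f (insert e S))))\<^sup>2) -
          integral\<^sup>L M (\<lambda>\<omega>. (beam_gain \<Phi> (insert e S) \<omega> - integral\<^sup>L M (beam_gain \<Phi> (insert e S)))\<^sup>2) -
          integral\<^sup>L M (\<lambda>\<omega>. (beam_gain \<Phi> (insert f S) \<omega> - integral\<^sup>L M (beam_gain \<Phi> (insert f S)))\<^sup>2) +
          integral\<^sup>L M (\<lambda>\<omega>. (beam_gain \<Phi> S \<omega> - integral\<^sup>L M (beam_gain \<Phi> S))\<^sup>2)"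
        unfolding v[OF s(1)] v[OF s(2)] v[OF s(3)] v[OF a(1)]
        using var_loc[OF a(1) a(2) a(4) a(3) a(5) a(6)] .
    qed simp
  qed
qed


end
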